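(* Let $k,T\ge1$, $\mathbf A\in\mathbb R^{k\times T}$, and define for $\mathbf Y\in\mathbb R^{k\times T}$, $\mathbf M\in\mathbb R^{k\times k}$ $$f(\mathbf Y,\mathbf M,\mathbf A)=\mathrm{Tr}\Big(-\frac4T\mathbf A^\top\mathbf Y+\frac2T\mathbf Y^\top\mathbf M\mathbf Y\Big)-\mathrm{Tr}(\mathbf M^\top\mathbf M).$$ Then $f$ has a saddle point in $(\mathbf Y,\mathbf M)$ and $$\min_{\mathbf Y}\max_{\mathbf M}f(\mathbf Y,\mathbf M,\mathbf A)=\max_{\mathbf M}\min_{\mathbf Y}f(\mathbf Y,\mathbf M,\mathbf A)=-\frac{3}{T^{2/3}}\mathrm{Tr}\big((\mathbf A\mathbf A^\top)^{2/3}\big).$$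
   Context: $(\mathbf A\mathbf A^\top)^{2/3}$ denotes the positive semidefinite matrix power defined via the eigendecomposition of the positive semidefinite matrix $\mathbf A\mathbf A^\top$. *)

theory Defs
  imports "HOL-Analysis.Analysis"
begin

definition diag_mat :: "('n::finite \<Rightarrow> real) \<Rightarrow> real^'n^'n" where
  "diag_mat d = (\<chi> i j. if i = j then d i else 0)"

definition psd_powr :: "real^'n::finite^'n \<Rightarrow> real \<Rightarrow> real^'n^'n" where
  "psd_powr S p = (SOME P. \<exists>U d. orthogonal_matrix U \<and> (\<forall>i. d i \<ge> 0) \<and>
       S = U ** diag_mat d ** transpose U \<and>
       P = U ** diag_mat (\<lambda>i. d i powr p) ** transpose U)"

text \<open>The objective f(Y,M,A); Y and A are k x T, M is k x k, T = CARD('t).\<close>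
definition saddle_f :: "real^'t::finite^'k::finite \<Rightarrow> real^'k^'k \<Rightarrow> real^'t^'k \<Rightarrow> real" where
  "saddle_f Y M A =
     trace ((- (4 / real CARD('t))) *\<^sub>R (transpose A ** Y)
            + (2 / real CARD('t)) *\<^sub>R (transpose Y ** M ** Y))
     - trace (transpose M ** M)"

end

theory Submission
  imports Defs
begin


lemma sym_inner:
  fixes S :: "real^'n^'n"
  assumes sym: "transpose S = S"
  shows "x \<bullet> (S *v y) = (S *v x) \<bullet> y"
proof -
  have "x \<bullet> (S *v y) = (x v* S) \<bullet> y" by (simp add: dot_lmul_matrix)
  also have "x v* S = S *v x" by (metis sym vector_transpose_matrix)
  finally show ?thesis .
qed

lemma quad_nonpos_lin0:
  fixes a b :: real
  assumes "\<forall>t. 2*t*a + t^2*b \<le> 0"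
  shows "a = 0"
proof (rule ccontr)
  assume a: "a \<noteq> 0"
  define c where "c = \<bar>b\<bar> + 1"
  have c: "c > 0" unfolding c_def by simp
  have "2*(a/c)*a + (a/c)^2*b \<le> 0" using assms by blast
  then have "(2*(a/c)*a + (a/c)^2*b) * c^2 \<le> 0" using c
    by (simp add: mult_nonpos_nonneg)
  also have "(2*(a/c)*a + (a/c)^2*b) * c^2 = a^2 * (2*c + b)" using c
    by (simp add: field_simps power2_eq_square)
  finally have "a^2 * (2*c+b) \<le> 0" .
  moreover have "2*c+b > 0" unfolding c_def by (cases "b \<ge> 0") auto
  moreover have "a^2 > 0" using a by simp
  ultimately show False by (metis mult_pos_pos not_le)
qed

lemma eigvec_exists:
  fixes S :: "real^'n^'n"
  assumes sym: "transpose S = S" and V: "subspace V" "V \<noteq> {0}"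
    and inv: "\<forall>x\<in>V. S *v x \<in> V"
  obtains v l where "v \<in> V" "norm v = 1" "S *v v = l *\<^sub>R v"
proof -
  define q where "q x = x \<bullet> (S *v x)" for x
  define K where "K = V \<inter> sphere 0 1"
  have "compact K" unfolding K_def
    by (simp add: V(1) closed_Int_compact closed_subspace)
  obtain x where x: "x \<in> V" "x \<noteq> 0" using V subspace_0 by blast
  have "x /\<^sub>R norm x \<in> K" using x V(1) unfolding K_def
    by (simp add: subspace_scale)
  then have "K \<noteq> {}" by blast
  have "continuous_on K q" unfolding q_def
    by (intro continuous_intros linear_continuous_on matrix_vector_mul_linear)
  then obtain v where v: "v \<in> K" "\<forall>y\<in>K. q y \<le> q v"
    using continuous_attains_sup[OF \<open>compact K\<close> \<open>K \<noteq> {}\<close>] by blast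
  define l where "l = q v"
  have vV: "v \<in> V" and nv: "norm v = 1" using v(1) unfolding K_def by auto
  have vv: "v \<bullet> v = 1" using nv by (simp add: norm_eq_1)
  have bound: "q y \<le> l * (y \<bullet> y)" if "y \<in> V" for y
  proof (cases "y = 0")
    case True then show ?thesis by (simp add: q_def)
  next
    case False
    define n where "n = norm y"
    have n: "n > 0" using False unfolding n_def by simp
    have nn: "n * (n * (inverse n * inverse n)) = 1" using n by (simp add: field_simps)
    have "y /\<^sub>R n \<in> K" using that V(1) False unfolding K_def n_def
      by (simp add: subspace_scale)
    then have h1: "q (y /\<^sub>R n) \<le> l" using v(2) unfolding l_def by blast
    have h2: "n^2 * q (y /\<^sub>R n) = q y" unfolding q_def using nn
      by (simp add: matrix_vector_mult_scaleR power2_eq_square)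
    have h3: "y \<bullet> y = n^2" unfolding n_def by (simp add: power2_norm_eq_inner)
    have "n^2 * q (y /\<^sub>R n) \<le> n^2 * l" using h1 n by (intro mult_left_mono) auto
    then show ?thesis using h2 h3 by (simp add: mult.commute)
  qed
  have orth: "w \<bullet> (S *v v) = 0" if w: "w \<in> V" "v \<bullet> w = 0" for w
  proof (rule quad_nonpos_lin0[where b = "q w - l * (w \<bullet> w)"], intro allI)
    fix t :: real
    have "v + t *\<^sub>R w \<in> V" using vV w V(1) by (simp add: subspace_add subspace_scale)
    then have B: "q (v + t *\<^sub>R w) \<le> l * ((v + t *\<^sub>R w) \<bullet> (v + t *\<^sub>R w))" by (rule bound)
    have E1: "q (v + t *\<^sub>R w) = l + 2*t*(w \<bullet> (S *v v)) + t^2 * q w"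
      unfolding q_def l_def using sym_inner[OF sym, of v w]
      by (simp add: matrix_vector_right_distrib matrix_vector_mult_scaleR inner_add_left inner_add_right
          inner_commute power2_eq_square algebra_simps)
    have E2: "(v + t *\<^sub>R w) \<bullet> (v + t *\<^sub>R w) = 1 + t^2 * (w \<bullet> w)"
      using vv w(2) by (simp add: inner_add_left inner_add_right inner_commute power2_eq_square)
    have "l + 2*t*(w \<bullet> (S *v v)) + t^2 * q w \<le> l * (1 + t^2 * (w \<bullet> w))"
      using B unfolding E1 E2 .
    then show "2*t*(w \<bullet> (S *v v)) + t^2*(q w - l*(w \<bullet> w)) \<le> 0"
      by (simp add: algebra_simps)
  qed
  define w where "w = S *v v - l *\<^sub>R v"
  have wV: "w \<in> V" unfolding w_def using inv vV V(1) by (simp add: subspace_diff subspace_scale)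
  have "v \<bullet> w = 0" unfolding w_def using vv by (simp add: inner_diff_right l_def q_def)
  then have "w \<bullet> (S *v v) = 0" using orth wV by blast
  then have "w \<bullet> w = 0" using \<open>v \<bullet> w = 0\<close> unfolding w_def
    by (simp add: inner_diff_left inner_diff_right inner_commute)
  then have "S *v v = l *\<^sub>R v" unfolding w_def by simp
  then show ?thesis using that vV nv by blast
qed




lemma eig_basis_aux:
  fixes S :: "real^'n^'n"
  assumes sym: "transpose S = S"
  shows "subspace V \<Longrightarrow> (\<forall>x\<in>V. S *v x \<in> V) \<Longrightarrow> dim V = m \<Longrightarrow>
    \<exists>B. B \<subseteq> V \<and> pairwise orthogonal B \<and> (\<forall>b\<in>B. norm b = 1 \<and> (\<exists>l. S *v b = l *\<^sub>R b)) \<and> span B = V"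
proof (induction m arbitrary: V rule: less_induct)
  case (less m V)
  note V = less.prems(1) and inv = less.prems(2)
  show ?case
  proof (cases "V = {0}")
    case True
    then show ?thesis by (intro exI[of _ "{}"]) auto
  next
    case False
    obtain v l where v: "v \<in> V" "norm v = 1" "S *v v = l *\<^sub>R v"
      using eigvec_exists[OF sym V False inv] by blast
    have vv: "v \<bullet> v = 1" using v(2) by (simp add: norm_eq_1)
    define V' where "V' = V \<inter> {x. v \<bullet> x = 0}"
    have sV': "subspace V'" unfolding V'_def by (simp add: V subspace_inter subspace_hyperplane)
    have inv': "\<forall>x\<in>V'. S *v x \<in> V'"
    proof
      fix x assume x: "x \<in> V'"
      have "v \<bullet> (S *v x) = (S *v v) \<bullet> x" by (rule sym_inner[OF sym])
      also have "\<dots> = 0" using x v(3) unfolding V'_def by simp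
      finally show "S *v x \<in> V'" using x inv unfolding V'_def by auto
    qed
    have "v \<notin> V'" using vv unfolding V'_def by auto
    then have "V' \<subset> V" using v(1) unfolding V'_def by blast
    then have "dim V' < dim V" using sV' V by (intro dim_psubset) (metis span_eq_iff)
    then obtain B' where B': "B' \<subseteq> V'" "pairwise orthogonal B'"
      "\<forall>b\<in>B'. norm b = 1 \<and> (\<exists>l. S *v b = l *\<^sub>R b)" "span B' = V'"
      using less.IH[OF _ sV' inv' refl] less.prems(3) by blast
    show ?thesis
    proof (intro exI[of _ "insert v B'"] conjI)
      show "insert v B' \<subseteq> V" using B'(1) v(1) unfolding V'_def by auto
      show "pairwise orthogonal (insert v B')"
        using B'(1,2) vv unfolding V'_def
        by (auto simp: pairwise_insert orthogonal_def inner_commute)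
      show "\<forall>b\<in>insert v B'. norm b = 1 \<and> (\<exists>l. S *v b = l *\<^sub>R b)" using B'(3) v by auto
      show "span (insert v B') = V"
      proof
        show "span (insert v B') \<subseteq> V" using B'(1) v(1) V unfolding V'_def
          by (intro span_minimal) auto
        show "V \<subseteq> span (insert v B')"
        proof
          fix x assume x: "x \<in> V"
          have "x - (v \<bullet> x) *\<^sub>R v \<in> V'" using x v(1) V vv unfolding V'_def
            by (auto simp: subspace_diff subspace_scale inner_diff_right)
          then have "x - (v \<bullet> x) *\<^sub>R v \<in> span (insert v B')"
            using B'(4) span_mono[of B' "insert v B'"] by auto
          moreover have "(v \<bullet> x) *\<^sub>R v \<in> span (insert v B')" by (simp add: span_base span_mul)
          ultimately have "(x - (v \<bullet> x) *\<^sub>R v) + (v \<bullet> x) *\<^sub>R v \<in> span (insert v B')"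
            by (rule span_add)
          then show "x \<in> span (insert v B')" by simp
        qed
      qed
    qed
  qed
qed

lemma diag_mat_mult: "diag_mat a ** diag_mat b = diag_mat (\<lambda>i. a i * b i)"
  unfolding diag_mat_def matrix_matrix_mult_def
  by (simp add: vec_eq_iff if_distrib[of "\<lambda>x. x * _"] cong: if_cong)

lemma spectral:
  fixes S :: "real^'n^'n"
  assumes sym: "transpose S = S"
  obtains U d where "orthogonal_matrix U" "S = U ** diag_mat d ** transpose U"
    "\<And>j. d j = column j U \<bullet> (S *v column j U)"
proof -
  obtain B where B: "pairwise orthogonal B" "\<forall>b\<in>B. norm b = 1 \<and> (\<exists>l. S *v b = l *\<^sub>R b)"
     "span B = UNIV"
    using eig_basis_aux[OF sym, of UNIV "dim (UNIV :: (real^'n) set)"] by auto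
  have "0 \<notin> B" using B(2) by auto
  then have ind: "independent B" using B(1) pairwise_orthogonal_independent by blast
  then have fin: "finite B" using finiteI_independent by blast
  have "card B = CARD('n)"
    using dim_span_eq_card_independent[OF ind] B(3) by simp
  then obtain f where f: "bij_betw f (UNIV::'n set) B"
    by (metis finite_class.finite_UNIV finite_same_card_bij fin)
  have fB: "f i \<in> B" for i using f by (auto simp: bij_betw_def)
  have nf: "norm (f i) = 1" for i using B(2) fB by blast
  have of: "orthogonal (f i) (f j)" if "i \<noteq> j" for i j
    using B(1) f that by (auto simp: pairwise_def bij_betw_def inj_on_def)
  define U where "U = (\<chi> i j. f j $ i)"
  have colU: "column j U = f j" for j by (simp add: U_def column_def vec_eq_iff)
  have oU: "orthogonal_matrix U"
    by (simp add: orthogonal_matrix_orthonormal_columns colU nf of)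
  define d where "d j = f j \<bullet> (S *v f j)" for j
  have ev: "S *v f j = d j *\<^sub>R f j" for j
  proof -
    obtain l where l: "S *v f j = l *\<^sub>R f j" using B(2) fB by blast
    have "f j \<bullet> f j = 1" using nf by (simp add: norm_eq_1)
    then have "d j = l" unfolding d_def l by simp
    then show ?thesis using l by simp
  qed
  have SU: "S ** U = U ** diag_mat d"
  proof -
    have "(S ** U) $ i $ j = (U ** diag_mat d) $ i $ j" for i j
    proof -
      have "(S ** U) $ i $ j = (S *v f j) $ i"
        by (simp add: matrix_matrix_mult_def matrix_vector_mult_def U_def)
      also have "\<dots> = d j * f j $ i" by (simp add: ev)
      also have "\<dots> = (U ** diag_mat d) $ i $ j"
        by (simp add: matrix_matrix_mult_def diag_mat_def U_def if_distrib[of "\<lambda>x. _ * x"] cong: if_cong)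
      finally show ?thesis .
    qed
    then show ?thesis by (simp add: vec_eq_iff)
  qed
  have "S = S ** (U ** transpose U)" using oU by (simp add: orthogonal_matrix_def)
  also have "\<dots> = U ** diag_mat d ** transpose U" by (simp add: matrix_mul_assoc SU)
  finally show ?thesis using that oU by (simp add: colU d_def)
qed




lemma mm_scaleR_left: "(c *\<^sub>R (X::real^'m^'n)) ** Y = c *\<^sub>R (X ** Y)"
  by (simp add: scalar_matrix_assoc)
lemma mm_scaleR_right: "(X::real^'m^'n) ** (c *\<^sub>R Y) = c *\<^sub>R (X ** Y)"
  by (simp add: matrix_scalar_ac scalar_matrix_assoc)
lemma mm_diff_left: "((X::real^'m^'n) - Y) ** Z = X ** Z - Y ** Z"
  by (simp add: matrix_matrix_mult_def vec_eq_iff sum_subtractf algebra_simps)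
lemma mm_diff_right: "(X::real^'m^'n) ** (Y - Z) = X ** Y - X ** Z"
  by (simp add: matrix_matrix_mult_def vec_eq_iff sum_subtractf algebra_simps)
lemma transpose_diff: "transpose ((X::real^'m^'n) - Y) = transpose X - transpose Y"
  by (simp add: transpose_def vec_eq_iff)
lemma trace_scaleR: "trace (c *\<^sub>R (X::real^'n^'n)) = c * trace X"
  by (simp add: trace_def sum_distrib_left)
lemma trace_transpose: "trace (transpose (X::real^'n^'n)) = trace X"
  by (simp add: trace_def transpose_def)
lemma trace_tt_nonneg: "trace (transpose (X::real^'m^'n) ** X) \<ge> 0"
  by (simp add: trace_def matrix_matrix_mult_def transpose_def sum_nonneg)
lemma transpose_diag: "transpose (diag_mat d) = diag_mat d"
  by (simp add: transpose_def diag_mat_def vec_eq_iff)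
lemma trace_diag: "trace (diag_mat d) = sum d UNIV"
  by (simp add: trace_def diag_mat_def)
lemma trace_conj: "orthogonal_matrix U \<Longrightarrow> trace (U ** X ** transpose U) = trace (X::real^'n^'n)"
  by (metis matrix_mul_assoc matrix_mul_rid orthogonal_matrix_def trace_mul_sym)


lemma saddle_f_eq:
  "saddle_f (Y::real^'t::finite^'k::finite) M A =
    - (4 / real CARD('t)) * trace (transpose A ** Y) + (2 / real CARD('t)) * trace (transpose Y ** M ** Y)
    - trace (transpose M ** M)"
  unfolding saddle_f_def trace_add trace_scaleR by simp

lemma generic_saddle:
  fixes A Y0 :: "real^'t::finite^'k::finite" and M0 :: "real^'k^'k"
  defines "T \<equiv> real CARD('t)"
  assumes M0: "M0 = (1/T) *\<^sub>R (Y0 ** transpose Y0)" and MY: "M0 ** Y0 = A"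
  shows "\<forall>Y M. saddle_f Y0 M A \<le> saddle_f Y0 M0 A \<and> saddle_f Y0 M0 A \<le> saddle_f Y M0 A"
    and "saddle_f Y0 M0 A = -3 * trace (transpose M0 ** M0)"
proof -
  have T: "T > 0" unfolding T_def by simp
  have sM0: "transpose M0 = M0" unfolding M0
    by (simp add: transpose_scalar matrix_transpose_mul)
  have At: "transpose A = transpose Y0 ** M0"
    using MY sM0 by (metis matrix_transpose_mul)
  have GY: "Y0 ** transpose Y0 = T *\<^sub>R M0" unfolding M0 using T by simp
  define N where "N = trace (transpose M0 ** M0)"
  have trq: "trace (transpose Y0 ** M ** Y0) = T * trace (M ** M0)" for M
  proof -
    have "trace (transpose Y0 ** M ** Y0) = trace (Y0 ** (transpose Y0 ** M))"
      by (rule trace_mul_sym)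
    also have "\<dots> = trace ((Y0 ** transpose Y0) ** M)" by (simp add: matrix_mul_assoc)
    also have "\<dots> = T * trace (M0 ** M)" by (simp add: GY mm_scaleR_left trace_scaleR)
    finally show ?thesis by (simp add: trace_mul_sym[of M0])
  qed
  have c: "trace (transpose A ** Y0) = T * N"
    unfolding At N_def sM0 using trq[of M0] by simp
  show val: "saddle_f Y0 M0 A = -3 * N"
    unfolding saddle_f_eq T_def[symmetric] c trq[of M0] using T
    by (simp add: N_def sM0 field_simps)
  show "\<forall>Y M. saddle_f Y0 M A \<le> saddle_f Y0 M0 A \<and> saddle_f Y0 M0 A \<le> saddle_f Y M0 A"
  proof (intro allI conjI)
    fix Y :: "real^'t^'k" and M :: "real^'k^'k"
    have e1: "trace (transpose (M - M0) ** (M - M0)) =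
       trace (transpose M ** M) - 2 * trace (M ** M0) + N"
    proof -
      have "trace (transpose M ** M0) = trace (M ** M0)"
        by (metis matrix_transpose_mul sM0 trace_mul_sym trace_transpose)
      moreover have "trace (M0 ** M) = trace (M ** M0)" by (rule trace_mul_sym)
      ultimately show ?thesis
        by (simp add: transpose_diff mm_diff_left mm_diff_right trace_sub N_def sM0)
    qed
    have "saddle_f Y0 M0 A - saddle_f Y0 M A = trace (transpose (M - M0) ** (M - M0))"
      unfolding saddle_f_eq T_def[symmetric] trq e1 using T
      by (simp add: N_def sM0 field_simps)
    then show "saddle_f Y0 M A \<le> saddle_f Y0 M0 A" using trace_tt_nonneg[of "M - M0"] by linarith
    define a where "a = trace (transpose Y ** M0 ** Y)"
    define b where "b = trace (transpose Y0 ** M0 ** Y)"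
    define cc where "cc = trace (transpose Y0 ** M0 ** Y0)"
    have ab: "trace (transpose A ** Y) = b" unfolding At b_def ..
    have ac: "trace (transpose A ** Y0) = cc" unfolding At cc_def ..
    have bb: "trace (transpose Y ** M0 ** Y0) = b" unfolding b_def
      by (metis matrix_transpose_mul sM0 trace_transpose transpose_transpose matrix_mul_assoc)
    have z: "trace (transpose (Y - Y0) ** M0 ** (Y - Y0)) = a - 2 * b + cc"
      unfolding a_def cc_def using bb[unfolded b_def] b_def
      by (simp add: transpose_diff mm_diff_left mm_diff_right trace_sub)
    have zn: "trace (transpose (Y - Y0) ** M0 ** (Y - Y0)) \<ge> 0"
    proof -
      define W where "W = transpose Y0 ** (Y - Y0)"
      have "transpose (Y - Y0) ** M0 ** (Y - Y0) = (1/T) *\<^sub>R (transpose W ** W)"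
        unfolding W_def M0 by (simp add: matrix_transpose_mul mm_scaleR_left mm_scaleR_right matrix_mul_assoc)
      then show ?thesis using trace_tt_nonneg[of W] T by (simp add: trace_scaleR)
    qed
    have "saddle_f Y M0 A - saddle_f Y0 M0 A = (2/T) * trace (transpose (Y - Y0) ** M0 ** (Y - Y0))"
      unfolding saddle_f_eq T_def[symmetric] ab ac z a_def[symmetric] cc_def[symmetric] using T
      by (simp add: field_simps)
    then show "saddle_f Y0 M0 A \<le> saddle_f Y M0 A" using zn T
      by (metis diff_ge_0_iff_ge divide_nonneg_pos mult_nonneg_nonneg zero_le_numeral)
  qed
qed




lemma conj_mult:
  fixes U :: "real^'k::finite^'k"
  assumes "transpose U ** U = mat 1"
  shows "U ** X ** transpose U ** (U ** Y ** transpose U) = U ** (X ** Y) ** transpose U"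
proof -
  have "U ** X ** transpose U ** (U ** Y ** transpose U) = U ** X ** (transpose U ** U) ** Y ** transpose U"
    by (simp add: matrix_mul_assoc)
  then show ?thesis using assms by (simp add: matrix_mul_assoc)
qed

lemma construction:
  fixes A :: "real^'t::finite^'k::finite" and U :: "real^'k^'k"
  defines "T \<equiv> real CARD('t)"
  assumes oU: "orthogonal_matrix U" and d: "\<And>i. d i \<ge> 0"
    and AA: "A ** transpose A = U ** diag_mat d ** transpose U"
  obtains Y0 M0 where "M0 = (1/T) *\<^sub>R (Y0 ** transpose Y0)" "M0 ** Y0 = A"
    "trace (transpose M0 ** M0) = (1 / T powr (2/3)) * trace (U ** diag_mat (\<lambda>i. d i powr (2/3)) ** transpose U)"
proof -
  have T: "T > 0" unfolding T_def by simp
  have UtU: "transpose U ** U = mat 1" and UUt: "U ** transpose U = mat 1"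
    using oU by (auto simp: orthogonal_matrix_def)
  define t where "t = T powr (1/3)"
  have t: "t > 0" unfolding t_def using T by simp
  have t2: "t^2 = T powr (2/3)" unfolding t_def using T
    by (simp add: powr_realpow[symmetric] powr_powr)
  have t3: "t^3 = T" unfolding t_def using T
    by (simp add: powr_realpow[symmetric] powr_powr)
  define Dm where "Dm = diag_mat (\<lambda>i. d i powr (-1/3))"
  define Dq where "Dq = diag_mat (\<lambda>i. d i powr (1/3))"
  define E where "E = diag_mat (\<lambda>i. if d i = 0 then 0 else (1::real))"
  define P where "P = U ** Dm ** transpose U"
  define Y0 where "Y0 = t *\<^sub>R (P ** A)"
  define M0 where "M0 = (1/T) *\<^sub>R (Y0 ** transpose Y0)"
  have sP: "transpose P = P" unfolding P_def Dm_def
    by (simp add: matrix_transpose_mul transpose_diag matrix_mul_assoc)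
  have DmDDm: "Dm ** diag_mat d ** Dm = Dq"
    unfolding Dm_def Dq_def diag_mat_mult
  proof -
    have "d i powr (-1/3) * d i * d i powr (-1/3) = d i powr (1/3)" for i
    proof (cases "d i = 0")
      case False
      then have "d i > 0" using d[of i] by simp
      then show ?thesis
        using powr_add[of "d i" "-1/3" 1] powr_add[of "d i" "-1/3+1" "-1/3"] by simp
    qed simp
    then show "diag_mat (\<lambda>i. d i powr (- 1 / 3) * d i * d i powr (- 1 / 3)) = diag_mat (\<lambda>i. d i powr (1 / 3))"
      by simp
  qed
  have DqDm: "Dq ** Dm = E"
    unfolding Dm_def Dq_def E_def diag_mat_mult
  proof -
    have "d i powr (1/3) * d i powr (-1/3) = (if d i = 0 then 0 else 1)" for i
    proof (cases "d i = 0")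
      case False
      then have "d i > 0" using d[of i] by simp
      then show ?thesis
        using powr_add[of "d i" "1/3" "-1/3"] False by simp
    qed simp
    then show "diag_mat (\<lambda>i. d i powr (1 / 3) * d i powr (- 1 / 3)) =
        diag_mat (\<lambda>i. if d i = 0 then 0 else (1::real))" by simp
  qed
  have DqDq: "Dq ** Dq = diag_mat (\<lambda>i. d i powr (2/3))"
    unfolding Dq_def diag_mat_mult
  proof -
    have "d i powr (1/3) * d i powr (1/3) = d i powr (2/3)" for i
    proof (cases "d i = 0")
      case False
      then have "d i > 0" using d[of i] by simp
      then show ?thesis using powr_add[of "d i" "1/3" "1/3"] by simp
    qed simp
    then show "diag_mat (\<lambda>i. d i powr (1 / 3) * d i powr (1 / 3)) = diag_mat (\<lambda>i. d i powr (2/3))"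
      by simp
  qed
  have YY: "Y0 ** transpose Y0 = t^2 *\<^sub>R (U ** Dq ** transpose U)"
  proof -
    have "Y0 ** transpose Y0 = t^2 *\<^sub>R (P ** (A ** transpose A) ** P)"
      unfolding Y0_def by (simp add: transpose_scalar matrix_transpose_mul mm_scaleR_left
        mm_scaleR_right sP matrix_mul_assoc power2_eq_square)
    also have "P ** (A ** transpose A) ** P = U ** Dq ** transpose U"
      unfolding AA P_def using conj_mult[OF UtU] DmDDm by simp
    finally show ?thesis .
  qed
  have M0': "M0 = (t^2/T) *\<^sub>R (U ** Dq ** transpose U)"
    unfolding M0_def YY by simp
  define B where "B = transpose U ** A"
  have BB: "B ** transpose B = diag_mat d"
  proof -
    have "B ** transpose B = transpose U ** (A ** transpose A) ** U"
      unfolding B_def by (simp add: matrix_transpose_mul matrix_mul_assoc)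
    also have "\<dots> = (transpose U ** U) ** diag_mat d ** (transpose U ** U)"
      unfolding AA by (simp add: matrix_mul_assoc)
    finally show ?thesis using UtU by simp
  qed
  have EB: "E ** B = B"
  proof -
    have "(E ** B) $ i $ k = B $ i $ k" for i k
    proof (cases "d i = 0")
      case True
      have "(B ** transpose B) $ i $ i = 0" using BB True by (simp add: diag_mat_def)
      then have "(\<Sum>j\<in>UNIV. B $ i $ j * B $ i $ j) = 0"
        by (simp add: matrix_matrix_mult_def transpose_def)
      then have "\<forall>j\<in>UNIV. B $ i $ j * B $ i $ j = 0"
        by (subst sum_nonneg_eq_0_iff[symmetric]) auto
      then have "B $ i $ k = 0" by simp
      then show ?thesis using True
        by (simp add: E_def diag_mat_def matrix_matrix_mult_def if_distrib[of "\<lambda>x. x * _"] cong: if_cong)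
    next
      case False
      then show ?thesis
        by (simp add: E_def diag_mat_def matrix_matrix_mult_def if_distrib[of "\<lambda>x. x * _"] cong: if_cong)
    qed
    then show ?thesis by (simp add: vec_eq_iff)
  qed
  have MY: "M0 ** Y0 = A"
  proof -
    have "M0 ** Y0 = (t^2/T * t) *\<^sub>R (U ** Dq ** transpose U ** (U ** Dm ** transpose U) ** A)"
      unfolding M0' Y0_def P_def by (simp add: mm_scaleR_left mm_scaleR_right matrix_mul_assoc)
    also have "t^2/T * t = 1" using t3 T by (simp add: power3_eq_cube power2_eq_square)
    also have "U ** Dq ** transpose U ** (U ** Dm ** transpose U) = U ** E ** transpose U"
      using conj_mult[OF UtU] DqDm by simp
    also have "U ** E ** transpose U ** A = U ** (E ** B)"
      unfolding B_def by (simp add: matrix_mul_assoc)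
    also have "\<dots> = U ** B" by (simp only: EB)
    also have "\<dots> = A" unfolding B_def using UUt by (simp add: matrix_mul_assoc)
    finally show ?thesis by simp
  qed
  have sM: "transpose M0 = M0" unfolding M0_def
    by (simp add: transpose_scalar matrix_transpose_mul)
  have "transpose M0 ** M0 = ((t^2/T)^2) *\<^sub>R (U ** diag_mat (\<lambda>i. d i powr (2/3)) ** transpose U)"
    unfolding sM unfolding M0' using conj_mult[OF UtU, of Dq Dq] DqDq
    by (simp add: mm_scaleR_left mm_scaleR_right power2_eq_square)
  moreover have "(t^2/T)^2 = 1 / T powr (2/3)"
  proof -
    have "(t^2/T)^2 = t^4 / T^2" by (simp add: power_divide power_mult[symmetric])
    also have "\<dots> = 1 / t^2" using t3 t T
      by (simp add: field_simps eval_nat_numeral)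
    finally show ?thesis using t2 by simp
  qed
  ultimately have "trace (transpose M0 ** M0) = (1 / T powr (2/3)) * trace (U ** diag_mat (\<lambda>i. d i powr (2/3)) ** transpose U)"
    by (simp add: trace_scaleR)
  then show ?thesis using that M0_def MY by blast
qed

theorem proposition1:
  fixes A :: "real^'t::finite^'k::finite"
  shows "(\<exists>Y0 M0. \<forall>Y M. saddle_f Y0 M A \<le> saddle_f Y0 M0 A \<and>
                          saddle_f Y0 M0 A \<le> saddle_f Y M0 A)
    \<and> (INF Y. SUP M. ereal (saddle_f Y M A)) =
        ereal (- 3 / (real CARD('t) powr (2/3)) * trace (psd_powr (A ** transpose A) (2/3)))
    \<and> (SUP M. INF Y. ereal (saddle_f Y M A)) =
        ereal (- 3 / (real CARD('t) powr (2/3)) * trace (psd_powr (A ** transpose A) (2/3)))"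
proof -
  define S where "S = A ** transpose A"
  have sS: "transpose S = S" unfolding S_def by (simp add: matrix_transpose_mul)
  obtain U d where oU: "orthogonal_matrix U" and SU: "S = U ** diag_mat d ** transpose U"
    and dd: "\<And>j. d j = column j U \<bullet> (S *v column j U)"
    using spectral[OF sS] by blast
  have d0: "d j \<ge> 0" for j
  proof -
    have "column j U \<bullet> (S *v column j U) = (transpose A *v column j U) \<bullet> (transpose A *v column j U)"
      unfolding S_def matrix_vector_mul_assoc[symmetric] dot_lmul_matrix[symmetric]
      by simp
    then show ?thesis using dd[of j] by simp
  qed
  have ex: "\<exists>P. \<exists>U d. orthogonal_matrix U \<and> (\<forall>i. d i \<ge> 0) \<and>
       S = U ** diag_mat d ** transpose U \<and>
       P = U ** diag_mat (\<lambda>i. d i powr (2/3)) ** transpose U"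
    using oU SU d0 by blast
  have ex2: "\<exists>U d. orthogonal_matrix U \<and> (\<forall>i. d i \<ge> 0) \<and>
       S = U ** diag_mat d ** transpose U \<and>
       psd_powr S (2/3) = U ** diag_mat (\<lambda>i. d i powr (2/3)) ** transpose U"
    using someI_ex[OF ex] unfolding psd_powr_def .
  then obtain U' d' where U': "orthogonal_matrix U'" "\<forall>i. d' i \<ge> 0" "S = U' ** diag_mat d' ** transpose U'"
    and PP: "psd_powr S (2/3) = U' ** diag_mat (\<lambda>i. d' i powr (2/3)) ** transpose U'"
    by (elim exE conjE)
  have d'0: "\<And>i. d' i \<ge> 0" using U'(2) by blast
  have AA': "A ** transpose A = U' ** diag_mat d' ** transpose U'" using U'(3) unfolding S_def .
  obtain Y0 M0 where YM: "M0 = (1/real CARD('t)) *\<^sub>R (Y0 ** transpose Y0)" "M0 ** Y0 = A"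
    and N0: "trace (transpose M0 ** M0) = (1 / real CARD('t) powr (2/3)) * trace (U' ** diag_mat (\<lambda>i. d' i powr (2/3)) ** transpose U')"
    by (rule construction[OF U'(1) d'0 AA'])
  have N: "trace (transpose M0 ** M0) = (1 / real CARD('t) powr (2/3)) * trace (psd_powr S (2/3))"
    unfolding PP by (rule N0)
  note sad = generic_saddle[OF YM]
  define v where "v = saddle_f Y0 M0 A"
  have v: "v = - 3 / (real CARD('t) powr (2/3)) * trace (psd_powr (A ** transpose A) (2/3))"
    unfolding v_def sad(2) N S_def by simp
  have le1: "saddle_f Y0 M A \<le> v" and le2: "v \<le> saddle_f Y M0 A" for Y M
    using sad(1) unfolding v_def by blast+
  have I1: "(INF Y. SUP M. ereal (saddle_f Y M A)) = ereal v"
  proof (rule antisym)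
    have "(INF Y. SUP M. ereal (saddle_f Y M A)) \<le> (SUP M. ereal (saddle_f Y0 M A))"
      by (rule INF_lower) simp
    also have "\<dots> \<le> ereal v" by (rule SUP_least) (simp add: le1)
    finally show "(INF Y. SUP M. ereal (saddle_f Y M A)) \<le> ereal v" .
    show "ereal v \<le> (INF Y. SUP M. ereal (saddle_f Y M A))"
    proof (rule INF_greatest)
      fix Y
      have "ereal v \<le> ereal (saddle_f Y M0 A)" by (simp add: le2)
      also have "\<dots> \<le> (SUP M. ereal (saddle_f Y M A))" by (rule SUP_upper) simp
      finally show "ereal v \<le> (SUP M. ereal (saddle_f Y M A))" .
    qed
  qed
  have I2: "(SUP M. INF Y. ereal (saddle_f Y M A)) = ereal v"
  proof (rule antisym)
    show "(SUP M. INF Y. ereal (saddle_f Y M A)) \<le> ereal v"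
    proof (rule SUP_least)
      fix M
      have "(INF Y. ereal (saddle_f Y M A)) \<le> ereal (saddle_f Y0 M A)" by (rule INF_lower) simp
      also have "\<dots> \<le> ereal v" by (simp add: le1)
      finally show "(INF Y. ereal (saddle_f Y M A)) \<le> ereal v" .
    qed
    have "ereal v \<le> (INF Y. ereal (saddle_f Y M0 A))" by (rule INF_greatest) (simp add: le2)
    also have "\<dots> \<le> (SUP M. INF Y. ereal (saddle_f Y M A))" by (rule SUP_upper) simp
    finally show "ereal v \<le> (SUP M. INF Y. ereal (saddle_f Y M A))" .
  qed
  have E: "\<exists>Y0 M0. \<forall>Y M. saddle_f Y0 M A \<le> saddle_f Y0 M0 A \<and>
                          saddle_f Y0 M0 A \<le> saddle_f Y M0 A"
    using sad(1) by (intro exI)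
  show ?thesis using E I1 I2 unfolding v by (intro conjI)
qed


end
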